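(* Let $\Gamma$ be a locally finite weighted graph and let $X$ be a finite subset of its vertex set. Then the following are equivalent: (1) $\Delta(\mathbb{R}^\Gamma_{\Gamma\setminus X})=\Delta(\mathbb{R}^\Gamma)$; (2) every function $f:X\to\mathbb{R}$ extends to a harmonic function on all of $\Gamma$.
   Context: Weighted graph: undirected, no loops or multiple edges, weights $\omega_{xy}=\omega_{yx}>0$, $\deg x=\sum_{y\sim x}\omega_{xy}$. Laplacian: $\Delta f(x)=f(x)-\frac{1}{\deg x}\sum_{y\sim x}\omega_{xy}f(y)$ for $f\in\mathbb{R}^\Gamma$. For a set $Y$ of vertices, $\mathbb{R}^\Gamma_Y$ denotes the space of functions $\Gamma\to\mathbb{R}$ supported on $Y$. A function is harmonic if $\Delta f\equiv 0$. *)

theory Defs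
  imports Complex_Main
begin

definition weighted_graph :: "('v \<Rightarrow> 'v \<Rightarrow> real) \<Rightarrow> bool" where
  "weighted_graph w \<longleftrightarrow> (\<forall>x y. w x y = w y x) \<and> (\<forall>x y. 0 \<le> w x y) \<and> (\<forall>x. w x x = 0)"

definition adj :: "('v \<Rightarrow> 'v \<Rightarrow> real) \<Rightarrow> 'v \<Rightarrow> 'v \<Rightarrow> bool" where
  "adj w x y \<longleftrightarrow> 0 < w x y"

definition nbhd :: "('v \<Rightarrow> 'v \<Rightarrow> real) \<Rightarrow> 'v \<Rightarrow> 'v set" where
  "nbhd w x = {y. adj w x y}"

definition locally_finite :: "('v \<Rightarrow> 'v \<Rightarrow> real) \<Rightarrow> bool" where
  "locally_finite w \<longleftrightarrow> (\<forall>x. finite (nbhd w x))"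

definition deg :: "('v \<Rightarrow> 'v \<Rightarrow> real) \<Rightarrow> 'v \<Rightarrow> real" where
  "deg w x = (\<Sum>y\<in>nbhd w x. w x y)"

definition laplacian :: "('v \<Rightarrow> 'v \<Rightarrow> real) \<Rightarrow> ('v \<Rightarrow> real) \<Rightarrow> 'v \<Rightarrow> real" where
  "laplacian w f x = f x - (1 / deg w x) * (\<Sum>y\<in>nbhd w x. w x y * f y)"

definition supported_on :: "'v set \<Rightarrow> ('v \<Rightarrow> real) set" where
  "supported_on Y = {f. \<forall>x. x \<notin> Y \<longrightarrow> f x = 0}"

definition harmonic :: "('v \<Rightarrow> 'v \<Rightarrow> real) \<Rightarrow> ('v \<Rightarrow> real) \<Rightarrow> bool" where
  "harmonic w f \<longleftrightarrow> (\<forall>x. laplacian w f x = 0)"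

end

theory Submission
  imports Defs
begin

lemma lap_diff: "laplacian w (\<lambda>x. f x - g x) x = laplacian w f x - laplacian w g x"
  unfolding laplacian_def by (simp add: right_diff_distrib sum_subtractf algebra_simps)

theorem lemma5p3:
  fixes w :: "'v \<Rightarrow> 'v \<Rightarrow> real" and X :: "'v set"
  assumes "weighted_graph w" and "locally_finite w"
    and "\<And>x. nbhd w x \<noteq> {}"
    and "finite X"
  shows "laplacian w ` supported_on (UNIV - X) = laplacian w ` UNIV
     \<longleftrightarrow> (\<forall>g :: 'v \<Rightarrow> real. \<exists>f. harmonic w f \<and> (\<forall>x\<in>X. f x = g x))"
proof
  assume eq: "laplacian w ` supported_on (UNIV - X) = laplacian w ` UNIV"
  show "\<forall>g :: 'v \<Rightarrow> real. \<exists>f. harmonic w f \<and> (\<forall>x\<in>X. f x = g x)"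
  proof
    fix g :: "'v \<Rightarrow> real"
    have "laplacian w g \<in> laplacian w ` supported_on (UNIV - X)" using eq by auto
    then obtain u where u: "u \<in> supported_on (UNIV - X)" "laplacian w g = laplacian w u" by auto
    have "harmonic w (\<lambda>x. g x - u x)"
      unfolding harmonic_def using u(2) by (simp add: lap_diff)
    moreover have "\<forall>x\<in>X. g x - u x = g x" using u(1) by (auto simp: supported_on_def)
    ultimately show "\<exists>f. harmonic w f \<and> (\<forall>x\<in>X. f x = g x)" by blast
  qed
next
  assume H: "\<forall>g :: 'v \<Rightarrow> real. \<exists>f. harmonic w f \<and> (\<forall>x\<in>X. f x = g x)"
  show "laplacian w ` supported_on (UNIV - X) = laplacian w ` UNIV"
  proof
    show "laplacian w ` supported_on (UNIV - X) \<subseteq> laplacian w ` UNIV" by auto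
  next
    show "laplacian w ` UNIV \<subseteq> laplacian w ` supported_on (UNIV - X)"
    proof
      fix y assume "y \<in> laplacian w ` (UNIV :: ('v \<Rightarrow> real) set)"
      then obtain h where h: "y = laplacian w h" by auto
      obtain f where f: "harmonic w f" "\<forall>x\<in>X. f x = h x" using H by blast
      have "(\<lambda>x. h x - f x) \<in> supported_on (UNIV - X)"
        using f(2) by (auto simp: supported_on_def)
      moreover have "laplacian w (\<lambda>x. h x - f x) = y"
        using f(1) h by (auto simp: lap_diff harmonic_def)
      ultimately show "y \<in> laplacian w ` supported_on (UNIV - X)" by (metis image_eqI)
    qed
  qed
qed

end
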